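(* Consider the two-dimensional map defined below and suppose there is no heterogeneity in speculative trading strategies, i.e. either $(w^F,w^C)=(1,0)$ or $(w^F,w^C)=(0,1)$. Then the map has a unique equilibrium (fixed point) $P_1=(\bar e_1,\Delta\bar y_1)$ given by $$\bar e_1=-\Omega\,\Delta\bar y,\qquad \Delta\bar y_1=\Delta y^{BP},$$ i.e. $P_1=(-\Omega\Delta y^{BP},\Delta y^{BP})$. If $w^F=1$ and $w^C=0$, then $P_1$ is locally stable. If $w^F=0$ and $w^C=1$, then $P_1$ is unstable.
   Context: The state variables are the (log) exchange rate $e_t$ and the output growth rate $\Delta y_t$, evolving according to the map $$e_t=e_{t-1}+(\mu+\rho)\left[w^F\left(-\Omega\Delta y_{t-1}-e_{t-1}\right)^3+w^C\left(e_{t-1}+\Omega\Delta y_{t-1}\right)\right],$$ $$\Delta y_t=\Delta y_{t-1}+w^{flex}\beta\left\{\Delta y^{BP}-\gamma\left[w^F\left(-\Omega\Delta y_{t-1}-e_{t-1}\right)^3+w^C\left(e_{t-1}+\Omega\Delta y_{t-1}\right)\right]-\Delta y_{t-1}\right\},$$ where $\mu>0$, $\rho>0$, $0<\beta<1$, $0<\Omega<1$, $0<w^{flex}<1$, $\Delta y^{BP}\in\mathbb{R}$ is a constant, $\gamma=\frac{(1-\theta)(\mu+\rho)}{\theta\pi}>0$ with $\theta\in(0,1)$, $\pi>0$, and $w^F,w^C\in[0,1]$ are the shares of fundamentalists and chartists with $w^F+w^C=1$. An equilibrium is a fixed point $(\bar e,\Delta\bar y)$ of this map; local stability refers to the fixed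 point of the map. *)

theory Defs
  imports "HOL-Analysis.Analysis"
begin

definition gamma_par :: "real \<Rightarrow> real \<Rightarrow> real \<Rightarrow> real \<Rightarrow> real" where
  "gamma_par \<mu> \<rho> \<theta> \<pi> = (1 - \<theta>) * (\<mu> + \<rho>) / (\<theta> * \<pi>)"

definition spec_term :: "real \<Rightarrow> real \<Rightarrow> real \<Rightarrow> real \<Rightarrow> real \<Rightarrow> real" where
  "spec_term wF wC \<Omega> e dy = wF * (- \<Omega> * dy - e) ^ 3 + wC * (e + \<Omega> * dy)"

definition exmap ::
  "real \<Rightarrow> real \<Rightarrow> real \<Rightarrow> real \<Rightarrow> real \<Rightarrow> real \<Rightarrow> real \<Rightarrow> real \<Rightarrow> real \<Rightarrow> real
   \<Rightarrow> real \<times> real \<Rightarrow> real \<times> real" where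
  "exmap \<mu> \<rho> \<beta> \<Omega> wflex dyBP \<theta> \<pi> wF wC = (\<lambda>(e, dy).
     (e + (\<mu> + \<rho>) * spec_term wF wC \<Omega> e dy,
      dy + wflex * \<beta> * (dyBP - gamma_par \<mu> \<rho> \<theta> \<pi> * spec_term wF wC \<Omega> e dy - dy)))"

definition is_fixed_point :: "('a \<Rightarrow> 'a) \<Rightarrow> 'a \<Rightarrow> bool" where
  "is_fixed_point T p \<longleftrightarrow> T p = p"

definition lyapunov_stable :: "('a::metric_space \<Rightarrow> 'a) \<Rightarrow> 'a \<Rightarrow> bool" where
  "lyapunov_stable T p \<longleftrightarrow>
     (\<forall>\<epsilon>>0. \<exists>\<delta>>0. \<forall>x. dist x p < \<delta> \<longrightarrow> (\<forall>n. dist ((T ^^ n) x) p < \<epsilon>))"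

definition locally_stable :: "('a::metric_space \<Rightarrow> 'a) \<Rightarrow> 'a \<Rightarrow> bool" where
  "locally_stable T p \<longleftrightarrow> lyapunov_stable T p \<and>
     (\<exists>\<delta>>0. \<forall>x. dist x p < \<delta> \<longrightarrow> (\<lambda>n. (T ^^ n) x) \<longlonglongrightarrow> p)"

definition unstable :: "('a::metric_space \<Rightarrow> 'a) \<Rightarrow> 'a \<Rightarrow> bool" where
  "unstable T p \<longleftrightarrow> \<not> lyapunov_stable T p"

end

theory Submission
  imports Defs
begin

lemma cube_le: fixes z w :: real assumes "\<bar>z\<bar> \<le> w" shows "\<bar>z\<bar>^3 \<le> w^3"
  using assms by (simp add: power_mono)

lemma stepA:
  fixes x u t a g Om :: real
  assumes "\<bar>x\<bar> \<le> t" "2*Om*\<bar>u\<bar> \<le> t" "0<a" "a<1" "g>0" "Om>0" "32*Om*g*t^2 \<le> 1"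
  shows "2*Om*\<bar>(1-a)*u + a*g*(x+Om*u)^3\<bar> \<le> (1-a/2)*t"
proof -
  have t0: "t \<ge> 0" using assms(1) by linarith
  have z: "\<bar>x+Om*u\<bar> \<le> 2*t"
  proof -
    have "\<bar>Om*u\<bar> = Om*\<bar>u\<bar>" using assms(6) by (simp add: abs_mult)
    thus ?thesis using assms(1,2,6) abs_triangle_ineq[of x "Om*u"] by linarith
  qed
  have z3: "\<bar>x+Om*u\<bar>^3 \<le> 8*t^3" using cube_le[OF z] by (simp add: power_mult_distrib)
  have "2*Om*\<bar>(1-a)*u + a*g*(x+Om*u)^3\<bar> \<le> 2*Om*((1-a)*\<bar>u\<bar> + a*g*\<bar>x+Om*u\<bar>^3)"
    using assms by (intro mult_left_mono) (auto simp: abs_mult power_abs intro!: order.trans[OF abs_triangle_ineq])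
  also have "\<dots> = (1-a)*(2*Om*\<bar>u\<bar>) + 2*Om*a*g*\<bar>x+Om*u\<bar>^3" by (simp add: algebra_simps)
  also have "\<dots> \<le> (1-a)*t + 2*Om*a*g*(8*t^3)"
    using assms z3 by (intro add_mono mult_left_mono) auto
  also have "\<dots> = (1-a)*t + a*t*(16*Om*g*t^2)/1" by (simp add: power2_eq_square power3_eq_cube)
  also have "\<dots> \<le> (1-a)*t + a*t*(1/2)"
  proof -
    have "16*Om*g*t^2 \<le> 1/2" using assms(7) by simp
    hence "a*t*(16*Om*g*t^2) \<le> a*t*(1/2)" using assms(3) t0 by (intro mult_left_mono) auto
    thus ?thesis by simp
  qed
  finally show ?thesis by (simp add: algebra_simps)
qed

lemma stepB:
  fixes x u t k Om :: real
  assumes "\<bar>x\<bar> \<le> t" "2*Om*\<bar>u\<bar> \<le> t" "k>0" "Om>0" "8*k*t^2 \<le> 1"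
  shows "\<bar>x - k*(x+Om*u)^3\<bar> \<le> t"
proof (cases "Om*\<bar>u\<bar> \<le> \<bar>x\<bar>")
  case True
  have t0: "t \<ge> 0" using assms(1) by linarith
  have xx: "8*k*\<bar>x\<bar>^3 \<le> \<bar>x\<bar>"
  proof -
    have "\<bar>x\<bar>^2 \<le> t^2" using assms(1) by (metis abs_ge_zero power_mono)
    hence "8*k*\<bar>x\<bar>^2 \<le> 1" using assms(3,5) by (smt (verit) mult_left_mono)
    hence "\<bar>x\<bar>*(8*k*\<bar>x\<bar>^2) \<le> \<bar>x\<bar>*1" by (intro mult_left_mono) auto
    thus ?thesis by (simp add: power2_eq_square power3_eq_cube algebra_simps)
  qed
  show ?thesis
  proof (cases "x \<ge> 0")
    case True
    have "\<bar>Om*u\<bar> \<le> x" using \<open>Om*\<bar>u\<bar> \<le> \<bar>x\<bar>\<close> True assms(4) by (simp add: abs_mult)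
    hence "0 \<le> x+Om*u" "x+Om*u \<le> 2*x" by (auto simp: abs_le_iff)
    hence "0 \<le> (x+Om*u)^3" "(x+Om*u)^3 \<le> (2*x)^3" using power_mono[of "x+Om*u" "2*x" 3] by auto
    hence "0 \<le> k*(x+Om*u)^3" "k*(x+Om*u)^3 \<le> 8*k*x^3" using assms(3)
      by (auto simp: power_mult_distrib intro: mult_left_mono) 
    thus ?thesis using xx True assms(1) by auto
  next
    case False
    have "\<bar>Om*u\<bar> \<le> -x" using \<open>Om*\<bar>u\<bar> \<le> \<bar>x\<bar>\<close> False assms(4) by (simp add: abs_mult)
    hence "x+Om*u \<le> 0" "2*x \<le> x+Om*u" by (auto simp: abs_le_iff)
    hence "(x+Om*u)^3 \<le> 0" "(2*x)^3 \<le> (x+Om*u)^3"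
      using power_mono_odd[of 3 "2*x" "x+Om*u"] power_mono_odd[of 3 "x+Om*u" 0] by simp_all
    hence k1: "k*(x+Om*u)^3 \<le> 0" and k2: "k*(8*x^3) \<le> k*(x+Om*u)^3"
      using assms(3) mult_left_mono[of "(x+Om*u)^3" 0 k] mult_left_mono[of "(2*x)^3" "(x+Om*u)^3" k]
      by (simp_all add: power_mult_distrib)
    have "x^3 \<le> 0" using False power_mono_odd[of 3 x 0] by simp
    hence "\<bar>x\<bar>^3 = -(x^3)" by (simp add: power_abs[symmetric])
    thus ?thesis using xx False assms(1) k1 k2 by (simp add: algebra_simps)
  qed
next
  case False
  have t0: "t \<ge> 0" using assms(1) by linarith
  have z: "\<bar>x+Om*u\<bar> \<le> t"
  proof -
    have "\<bar>Om*u\<bar> = Om*\<bar>u\<bar>" using assms(4) by (simp add: abs_mult)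
    thus ?thesis using False assms(2,4) abs_triangle_ineq[of x "Om*u"] by linarith
  qed
  have "\<bar>x+Om*u\<bar>^3 \<le> t^3" using cube_le[OF z] .
  hence "k*\<bar>x+Om*u\<bar>^3 \<le> k*t^3" using assms(3) by (intro mult_left_mono) auto
  also have "k*t^3 = t*(k*t^2)" by (simp add: power2_eq_square power3_eq_cube)
  also have "\<dots> \<le> t*(1/8)" using assms(5) t0 by (intro mult_left_mono) auto
  finally have "k*\<bar>x+Om*u\<bar>^3 \<le> t/8" by simp
  moreover have "\<bar>x - k*(x+Om*u)^3\<bar> \<le> \<bar>x\<bar> + k*\<bar>x+Om*u\<bar>^3"
  proof -
    have "\<bar>k*(x+Om*u)^3\<bar> = k*\<bar>x+Om*u\<bar>^3" using assms(3) by (simp add: abs_mult power_abs)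
    thus ?thesis using abs_triangle_ineq4[of x "k*(x+Om*u)^3"] by linarith
  qed
  ultimately show ?thesis using False assms(2) by linarith
qed


lemma stepC0:
  fixes x u t a k Om :: real
  assumes "x \<ge> 0" "x \<le> t" "(1-a/4)*t \<le> x" "2*Om*\<bar>u\<bar> \<le> (1-a/2)*t" "k>0" "Om>0" "0<a" "a<1" "8*k*t^2 \<le> 1"
  shows "\<bar>x - k*(x+Om*u)^3\<bar> \<le> t - k/8*t^3"
proof -
  have t0: "t \<ge> 0" using assms by linarith
  have "\<bar>Om*u\<bar> \<le> (1/2 - a/4)*t" using assms(4,6) by (simp add: abs_mult algebra_simps)
  hence z1: "t/2 \<le> x+Om*u" and z2: "x+Om*u \<le> 2*x" using assms(3,7,8) t0 by (auto simp: abs_le_iff algebra_simps)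
  have "(t/2)^3 \<le> (x+Om*u)^3" using power_mono[OF z1, of 3] t0 by simp
  hence k1: "k*t^3/8 \<le> k*(x+Om*u)^3" using assms(5) mult_left_mono[of "(t/2)^3" "(x+Om*u)^3" k]
    by (simp add: power_divide)
  have "(x+Om*u)^3 \<le> (2*x)^3" using power_mono[OF z2, of 3] z1 t0 by simp
  hence k2: "k*(x+Om*u)^3 \<le> 8*k*x^3" using assms(5) mult_left_mono[of "(x+Om*u)^3" "(2*x)^3" k]
    by (simp add: power_mult_distrib)
  have xx: "8*k*x^3 \<le> x"
  proof -
    have "x^2 \<le> t^2" using assms(1,2) by (simp add: power_mono)
    hence "8*k*x^2 \<le> 1" using assms(5,9) by (smt (verit) mult_left_mono)
    hence "x*(8*k*x^2) \<le> x*1" using assms(1) by (intro mult_left_mono) auto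
    thus ?thesis by (simp add: power2_eq_square power3_eq_cube algebra_simps)
  qed
  show ?thesis using k1 k2 xx assms(2) by (simp add: abs_le_iff)
qed

lemma stepC:
  fixes x u t a k Om :: real
  assumes "\<bar>x\<bar> \<le> t" "(1-a/4)*t \<le> \<bar>x\<bar>" "2*Om*\<bar>u\<bar> \<le> (1-a/2)*t" "k>0" "Om>0" "0<a" "a<1" "8*k*t^2 \<le> 1"
  shows "\<bar>x - k*(x+Om*u)^3\<bar> \<le> t - k/8*t^3"
proof (cases "x \<ge> 0")
  case True thus ?thesis using stepC0[of x t a Om u k] assms by simp
next
  case False
  have "\<bar>-x - k*(-x+Om*(-u))^3\<bar> \<le> t - k/8*t^3" using stepC0[of "-x" t a Om "-u" k] assms False by simp
  moreover have "-x - k*(-x+Om*(-u))^3 = -(x - k*(x+Om*u)^3)" by (simp add: power3_eq_cube algebra_simps)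
  ultimately show ?thesis by simp
qed

lemma stepD:
  fixes x u t a k Om :: real
  assumes "\<bar>x\<bar> \<le> (1-a/4)*t" "\<bar>x+Om*u\<bar> \<le> 2*t" "k>0" "t \<ge> 0" "36*k*t^2 \<le> a"
  shows "\<bar>x - k*(x+Om*u)^3\<bar> \<le> t - k/8*t^3"
proof -
  have "\<bar>k*(x+Om*u)^3\<bar> = k*\<bar>x+Om*u\<bar>^3" using assms(3) by (simp add: abs_mult power_abs)
  hence "\<bar>x - k*(x+Om*u)^3\<bar> \<le> \<bar>x\<bar> + k*\<bar>x+Om*u\<bar>^3" using abs_triangle_ineq4[of x "k*(x+Om*u)^3"] by linarith
  also have "\<dots> \<le> (1-a/4)*t + k*(2*t)^3"
    using assms cube_le[OF assms(2)] by (intro add_mono mult_left_mono) auto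
  also have "\<dots> \<le> t - k/8*t^3"
  proof -
    have "t*(36*k*t^2) \<le> t*a" using assms(4,5) by (intro mult_left_mono) auto
    hence "36*(k*t^3) \<le> a*t" by (simp add: power2_eq_square power3_eq_cube algebra_simps)
    moreover have "0 \<le> k*t^3" using assms(3,4) by simp
    moreover have "k*(2*t)^3 = 8*(k*t^3)" by (simp add: power_mult_distrib)
    moreover have "k/8*t^3 = (k*t^3)/8" by simp
    ultimately show ?thesis by (simp add: algebra_simps)
  qed
  finally show ?thesis .
qed

definition FF :: "real \<Rightarrow> real \<Rightarrow> real \<Rightarrow> real \<Rightarrow> real \<times> real \<Rightarrow> real \<times> real" where
  "FF k a g Om p = (fst p - k*(fst p + Om* snd p)^3, (1-a)* snd p + a*g*(fst p + Om* snd p)^3)"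

definition VV :: "real \<Rightarrow> real \<times> real \<Rightarrow> real" where
  "VV Om p = max \<bar>fst p\<bar> (2*Om*\<bar>snd p\<bar>)"

lemma VV_ge0: "Om > 0 \<Longrightarrow> VV Om p \<ge> 0" by (simp add: VV_def)

lemma twostep:
  fixes k a g Om t :: real and p :: "real \<times> real"
  assumes "k>0" "0<a" "a<1" "g>0" "Om>0" "VV Om p \<le> t" "32*Om*g*t^2 \<le> 1" "36*k*t^2 \<le> a"
  shows "VV Om (FF k a g Om p) \<le> t" "VV Om (FF k a g Om (FF k a g Om p)) \<le> t - k/8*t^3"
proof -
  obtain x u where p: "p = (x,u)" by force
  have t0: "t \<ge> 0" using assms(6) VV_ge0[OF assms(5), of p] by linarith
  have k8: "8*k*t^2 \<le> 1" using assms(3,8) by linarith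
  have hx: "\<bar>x\<bar> \<le> t" and hu: "2*Om*\<bar>u\<bar> \<le> t" using assms(6) by (auto simp: VV_def p)
  define x1 where "x1 = x - k*(x+Om*u)^3"
  define u1 where "u1 = (1-a)*u + a*g*(x+Om*u)^3"
  have F1: "FF k a g Om p = (x1, u1)" by (simp add: FF_def p x1_def u1_def)
  have hx1: "\<bar>x1\<bar> \<le> t" unfolding x1_def using stepB[OF hx hu assms(1,5) k8] .
  have hu1: "2*Om*\<bar>u1\<bar> \<le> (1-a/2)*t" unfolding u1_def using stepA[OF hx hu assms(2,3,4,5,7)] .
  have hu1': "2*Om*\<bar>u1\<bar> \<le> t" 
  proof -
    have "(1-a/2)*t = t - (a*t)/2" by (simp add: algebra_simps)
    moreover have "0 \<le> a*t" using assms(2) t0 by simp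
    ultimately show ?thesis using hu1 by linarith
  qed
  show "VV Om (FF k a g Om p) \<le> t" using hx1 hu1' by (simp add: F1 VV_def)
  define x2 where "x2 = x1 - k*(x1+Om*u1)^3"
  define u2 where "u2 = (1-a)*u1 + a*g*(x1+Om*u1)^3"
  have F2: "FF k a g Om (x1,u1) = (x2, u2)" by (simp add: FF_def x2_def u2_def)
  have hu2: "2*Om*\<bar>u2\<bar> \<le> (1-a/2)*t" unfolding u2_def using stepA[OF hx1 hu1' assms(2,3,4,5,7)] .
  have "k/8*t^3 \<le> a/2*t"
  proof -
    have "0 \<le> k*t^2" using assms(1) by simp
    hence "t*(k/8*t^2) \<le> t*(a/2)" using t0 assms(8) by (intro mult_left_mono) auto
    thus ?thesis by (simp add: power2_eq_square power3_eq_cube algebra_simps)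
  qed
  hence hu2': "2*Om*\<bar>u2\<bar> \<le> t - k/8*t^3" using hu2 by (simp add: algebra_simps)
  have hx2: "\<bar>x2\<bar> \<le> t - k/8*t^3"
  proof (cases "(1-a/4)*t \<le> \<bar>x1\<bar>")
    case True
    show ?thesis unfolding x2_def using stepC[OF hx1 True hu1 assms(1,5,2,3) k8] .
  next
    case False
    have "\<bar>Om*u1\<bar> \<le> t" using hu1' assms(5) t0 by (simp add: abs_mult)
    hence "\<bar>x1+Om*u1\<bar> \<le> 2*t" using hx1 abs_triangle_ineq[of x1 "Om*u1"] by linarith
    thus ?thesis unfolding x2_def using stepD[of x1 a t Om u1 k] False assms(1,8) t0 by linarith
  qed
  show "VV Om (FF k a g Om (FF k a g Om p)) \<le> t - k/8*t^3"
    using hx2 hu2' by (simp add: F1 F2 VV_def)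
qed


lemma small_conds:
  fixes t r k a g Om :: real
  assumes "0 \<le> t" "t \<le> r" "32*Om*g*r^2 \<le> 1" "36*k*r^2 \<le> a" "k>0" "g>0" "Om>0"
  shows "32*Om*g*t^2 \<le> 1" "36*k*t^2 \<le> a"
proof -
  have "t^2 \<le> r^2" using assms(1,2) by (simp add: power_mono)
  hence "32*Om*g*t^2 \<le> 32*Om*g*r^2" "36*k*t^2 \<le> 36*k*r^2" using assms(5,6,7)
    by (intro mult_left_mono; simp)+
  thus "32*Om*g*t^2 \<le> 1" "36*k*t^2 \<le> a" using assms(3,4) by linarith+
qed

lemma iter_mono:
  fixes k a g Om r :: real and q :: "real \<times> real"
  assumes "k>0" "0<a" "a<1" "g>0" "Om>0" "32*Om*g*r^2 \<le> 1" "36*k*r^2 \<le> a" "VV Om q \<le> r"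
  shows "VV Om ((FF k a g Om ^^ n) q) \<le> VV Om q"
    and "VV Om ((FF k a g Om ^^ Suc n) q) \<le> VV Om ((FF k a g Om ^^ n) q)"
    and "VV Om ((FF k a g Om ^^ Suc (Suc n)) q) \<le> VV Om ((FF k a g Om ^^ n) q) - k/8 * (VV Om ((FF k a g Om ^^ n) q))^3"
proof -
  let ?s = "\<lambda>n. (FF k a g Om ^^ n) q"
  have step: "VV Om (?s (Suc m)) \<le> VV Om (?s m) \<and>
     VV Om (?s (Suc (Suc m))) \<le> VV Om (?s m) - k/8 * (VV Om (?s m))^3" if "VV Om (?s m) \<le> r" for m
  proof -
    have c: "32*Om*g*(VV Om (?s m))^2 \<le> 1" "36*k*(VV Om (?s m))^2 \<le> a"
      using small_conds[OF VV_ge0[OF assms(5)] that assms(6,7,1,4,5)] by auto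
    show ?thesis using twostep[OF assms(1-5) order_refl c] by simp
  qed
  have all: "VV Om (?s m) \<le> VV Om q" for m
  proof (induction m)
    case 0 show ?case by simp
  next
    case (Suc m)
    then show ?case using step[of m] assms(8) by linarith
  qed
  show "VV Om (?s n) \<le> VV Om q" by (rule all)
  show "VV Om (?s (Suc n)) \<le> VV Om (?s n)" using step[of n] all[of n] assms(8) by linarith
  show "VV Om (?s (Suc (Suc n))) \<le> VV Om (?s n) - k/8 * (VV Om (?s n))^3"
    using step[of n] all[of n] assms(8) by linarith
qed

lemma iter_conv:
  fixes k a g Om r :: real and q :: "real \<times> real"
  assumes "k>0" "0<a" "a<1" "g>0" "Om>0" "32*Om*g*r^2 \<le> 1" "36*k*r^2 \<le> a" "VV Om q \<le> r"
  shows "(\<lambda>n. VV Om ((FF k a g Om ^^ n) q)) \<longlonglongrightarrow> 0"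
proof -
  let ?V = "\<lambda>n. VV Om ((FF k a g Om ^^ n) q)"
  have dec: "decseq ?V" using iter_mono(2)[OF assms] by (intro decseq_SucI) simp
  obtain L where L: "?V \<longlonglongrightarrow> L" "\<forall>i. L \<le> ?V i"
    using decseq_convergent[OF dec, of 0] VV_ge0[OF assms(5)] by blast
  have L0: "L \<ge> 0"
  proof -
    have "\<forall>n. 0 \<le> ?V n" using VV_ge0[OF assms(5)] by blast
    thus ?thesis using L(1) by (intro LIMSEQ_le_const[OF L(1)]) auto
  qed
  have l1: "(\<lambda>n. ?V (n + 2)) \<longlonglongrightarrow> L" using LIMSEQ_ignore_initial_segment[OF L(1), of 2] .
  have l2: "(\<lambda>n. ?V n - k/8 * (?V n)^3) \<longlonglongrightarrow> L - k/8 * L^3"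
    by (intro tendsto_intros L(1))
  have "L \<le> L - k/8 * L^3"
    using l1 l2 iter_mono(3)[OF assms] by (intro LIMSEQ_le[OF l1 l2]) (auto simp: numeral_2_eq_2)
  hence "k/8 * L^3 \<le> 0" by simp
  hence "L^3 \<le> 0" using assms(1) by (simp add: mult_le_0_iff)
  hence "L = 0" using L0 zero_less_power[of L 3] by (cases "L = 0") auto
  thus ?thesis using L(1) by simp
qed


lemma norm_VV:
  fixes Om :: real and p :: "real \<times> real"
  assumes "Om > 0"
  shows "norm p \<le> (1 + 1/(2*Om)) * VV Om p"
proof -
  obtain x u where p: "p = (x,u)" by force
  have "norm p \<le> \<bar>x\<bar> + \<bar>u\<bar>" using norm_Pair_le[of x u] by (simp add: p)
  moreover have "\<bar>x\<bar> \<le> VV Om p" by (simp add: VV_def p)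
  moreover have "\<bar>u\<bar> \<le> VV Om p / (2*Om)"
    using assms by (simp add: VV_def p pos_le_divide_eq mult.commute)
  ultimately show ?thesis by (simp add: algebra_simps)
qed

lemma VV_norm:
  fixes Om :: real and p :: "real \<times> real"
  assumes "Om > 0" "Om < 1"
  shows "VV Om p \<le> 2 * norm p"
proof -
  obtain x u where p: "p = (x,u)" by force
  have "\<bar>x\<bar> \<le> norm p" "\<bar>u\<bar> \<le> norm p" using norm_fst_le[of x u] norm_snd_le[of u x] by (auto simp: p)
  moreover have "2*Om*\<bar>u\<bar> \<le> 2*\<bar>u\<bar>" using assms by (intro mult_right_mono) auto
  ultimately show ?thesis by (simp add: VV_def p)
qed

lemma stable_generic:
  fixes T :: "real \<times> real \<Rightarrow> real \<times> real" and P1 :: "real \<times> real" and k a g Om :: real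
  assumes "k>0" "0<a" "a<1" "g>0" "Om>0" "Om<1"
    and TF: "\<And>q. T (P1 + q) = P1 + FF k a g Om q"
  shows "locally_stable T P1"
proof -
  have iterT: "(T^^n) (P1 + q) = P1 + (FF k a g Om ^^ n) q" for n q
    by (induction n) (simp_all add: TF)
  have xform: "dist ((T^^n) x) P1 = norm ((FF k a g Om ^^ n) (x - P1))" for n x
    using iterT[of n "x - P1"] by (simp add: dist_norm)
  define R where "R = min (1/(32*Om*g)) (a/(36*k))"
  have R0: "R > 0" using assms by (simp add: R_def)
  define r where "r = sqrt R"
  have r0: "r > 0" using R0 by (simp add: r_def)
  have r2: "r^2 = R" using R0 by (simp add: r_def)
  have c1: "32*Om*g*r^2 \<le> 1"
  proof -
    have "r^2 \<le> 1/(32*Om*g)" by (simp add: r2 R_def)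
    thus ?thesis using assms by (simp add: pos_le_divide_eq mult.commute mult.left_commute)
  qed
  have c2: "36*k*r^2 \<le> a"
  proof -
    have "r^2 \<le> a/(36*k)" by (simp add: r2 R_def)
    thus ?thesis using assms by (simp add: pos_le_divide_eq mult.commute mult.left_commute)
  qed
  define C where "C = 1 + 1/(2*Om)"
  have C0: "C > 0" using assms by (simp add: C_def add_pos_pos)
  have lyap: "lyapunov_stable T P1"
    unfolding lyapunov_stable_def
  proof (intro allI impI)
    fix \<epsilon> :: real assume e: "\<epsilon> > 0"
    define \<delta> where "\<delta> = min r (\<epsilon>/C) / 2"
    have d0: "\<delta> > 0" using r0 e C0 by (simp add: \<delta>_def)
    show "\<exists>\<delta>>0. \<forall>x. dist x P1 < \<delta> \<longrightarrow> (\<forall>n. dist ((T ^^ n) x) P1 < \<epsilon>)"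
    proof (intro exI[of _ \<delta>] conjI allI impI d0)
      fix x n assume "dist x P1 < \<delta>"
      hence nq: "norm (x - P1) < \<delta>" by (simp add: dist_norm)
      have vq: "VV Om (x - P1) < min r (\<epsilon>/C)"
        using VV_norm[OF assms(5,6), of "x - P1"] nq d0 by (simp add: \<delta>_def)
      hence vr: "VV Om (x - P1) \<le> r" by simp
      have "norm ((FF k a g Om ^^ n) (x - P1)) \<le> C * VV Om ((FF k a g Om ^^ n) (x - P1))"
        using norm_VV[OF assms(5)] by (simp add: C_def)
      also have "\<dots> \<le> C * VV Om (x - P1)"
        using iter_mono(1)[OF assms(1-5) c1 c2 vr] C0 by (intro mult_left_mono) auto
      also have "\<dots> < C * (\<epsilon>/C)" using vq C0 by (intro mult_strict_left_mono) auto
      also have "\<dots> = \<epsilon>" using C0 by simp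
      finally show "dist ((T ^^ n) x) P1 < \<epsilon>" by (simp add: xform)
    qed
  qed
  have attr: "\<forall>x. dist x P1 < r/2 \<longrightarrow> (\<lambda>n. (T ^^ n) x) \<longlonglongrightarrow> P1"
  proof (intro allI impI)
    fix x assume "dist x P1 < r/2"
    hence "norm (x - P1) < r/2" by (simp add: dist_norm)
    hence vr: "VV Om (x - P1) \<le> r" using VV_norm[OF assms(5,6), of "x - P1"] by simp
    have V0: "(\<lambda>n. VV Om ((FF k a g Om ^^ n) (x - P1))) \<longlonglongrightarrow> 0"
      using iter_conv[OF assms(1-5) c1 c2 vr] .
    have "(\<lambda>n. C * VV Om ((FF k a g Om ^^ n) (x - P1))) \<longlonglongrightarrow> C * 0"
      by (intro tendsto_intros V0)
    hence lim: "(\<lambda>n. C * VV Om ((FF k a g Om ^^ n) (x - P1))) \<longlonglongrightarrow> 0" by simp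
    have ev: "eventually (\<lambda>n. norm ((FF k a g Om ^^ n) (x - P1)) \<le> C * VV Om ((FF k a g Om ^^ n) (x - P1))) sequentially"
      unfolding C_def using norm_VV[OF assms(5)] by (intro always_eventually) blast
    have "(\<lambda>n. (FF k a g Om ^^ n) (x - P1)) \<longlonglongrightarrow> 0"
      using Lim_null_comparison[OF ev lim] .
    hence "(\<lambda>n. P1 + (FF k a g Om ^^ n) (x - P1)) \<longlonglongrightarrow> P1 + 0"
      by (intro tendsto_intros)
    moreover have "(T ^^ n) x = P1 + (FF k a g Om ^^ n) (x - P1)" for n
      using iterT[of n "x - P1"] by simp
    ultimately show "(\<lambda>n. (T ^^ n) x) \<longlonglongrightarrow> P1" by simp
  qed
  show ?thesis unfolding locally_stable_def using lyap attr r0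
    by (intro conjI exI[of _ "r/2"]) auto
qed


definition GG :: "real \<Rightarrow> real \<Rightarrow> real \<Rightarrow> real \<Rightarrow> real \<times> real \<Rightarrow> real \<times> real" where
  "GG k a g Om p = (fst p + k*(fst p + Om * snd p), snd p + a*(-g*(fst p + Om * snd p) - snd p))"

lemma unstable_generic:
  fixes T :: "real \<times> real \<Rightarrow> real \<times> real" and P1 :: "real \<times> real" and k a g Om :: real
  assumes "k>0" "0<a" "g>0" "Om>0"
    and TG: "\<And>q. T (P1 + q) = P1 + GG k a g Om q"
  shows "unstable T P1"
proof -
  define m where "m = 1 - a - a*g*Om"
  define tr where "tr = 1 + k + m"
  define dt where "dt = m*(1+k) + a*g*k*Om"
  define D where "D = tr^2 - 4*dt"
  have Dgt: "D - (2 - tr)^2 = 4*k*a" by (simp add: D_def tr_def dt_def m_def power2_eq_square algebra_simps)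
  have "k*a > 0" using assms by simp
  hence D1: "D > (2 - tr)^2" using Dgt by linarith
  hence D0: "D \<ge> 0" by (smt (verit) zero_le_power2)
  define lam where "lam = (tr + sqrt D)/2"
  have "sqrt ((2-tr)^2) < sqrt D" using D1 by (simp only: real_sqrt_less_iff)
  hence "\<bar>2 - tr\<bar> < sqrt D" by simp
  hence lam1: "lam > 1" by (simp add: lam_def)
  have sq: "sqrt D ^ 2 = D" using D0 by simp
  have char: "lam^2 - tr*lam + dt = 0"
  proof -
    have "lam^2 - tr*lam + dt = ((sqrt D)^2 - D)/4"
      by (simp add: lam_def D_def power2_eq_square field_simps)
    thus ?thesis using sq by simp
  qed
  define w where "w = (k*Om, lam - 1 - k)"
  have w0: "norm w > 0" using assms by (simp add: w_def zero_prod_def)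
  have eig: "GG k a g Om (c *\<^sub>R w) = (lam*c) *\<^sub>R w" for c
  proof -
    have e2: "c*(lam-1-k) + a*(-g*(c*(k*Om) + Om*(c*(lam-1-k))) - c*(lam-1-k)) - lam*c*(lam-1-k)
        = -c*(lam^2 - tr*lam + dt)"
      by (simp add: tr_def dt_def m_def power2_eq_square algebra_simps)
    hence e3: "c*(lam-1-k) + a*(-g*(c*(k*Om) + Om*(c*(lam-1-k))) - c*(lam-1-k)) = lam*c*(lam-1-k)"
      using char by simp
    have e1: "c*(k*Om) + k*(c*(k*Om) + Om*(c*(lam-1-k))) = lam*c*(k*Om)"
      by (simp add: algebra_simps)
    show ?thesis using e1 e3 by (simp add: GG_def w_def)
  qed
  have iterG: "(GG k a g Om ^^ n) (c *\<^sub>R w) = (lam^n*c) *\<^sub>R w" for n c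
    by (induction n) (simp_all add: eig mult.assoc)
  have iterT: "(T^^n) (P1 + q) = P1 + (GG k a g Om ^^ n) q" for n q
    by (induction n) (simp_all add: TG)
  show ?thesis unfolding unstable_def lyapunov_stable_def
  proof
    assume H: "\<forall>\<epsilon>>0. \<exists>\<delta>>0. \<forall>x. dist x P1 < \<delta> \<longrightarrow> (\<forall>n. dist ((T ^^ n) x) P1 < \<epsilon>)"
    obtain \<delta> where d0: "\<delta> > 0" and d: "\<forall>x. dist x P1 < \<delta> \<longrightarrow> (\<forall>n. dist ((T ^^ n) x) P1 < 1)"
      using H[rule_format, of 1] by auto
    define c where "c = \<delta> / (2 * norm w)"
    have c0: "c > 0" using d0 w0 by (simp add: c_def)
    have cw: "c * norm w = \<delta>/2" using w0 by (simp add: c_def)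
    have "dist (P1 + c *\<^sub>R w) P1 < \<delta>" using cw d0 c0 by (simp add: dist_norm)
    hence all: "dist ((T ^^ n) (P1 + c *\<^sub>R w)) P1 < 1" for n using d by blast
    obtain n where n: "2/\<delta> < lam^n" using real_arch_pow[OF lam1] by blast
    have "dist ((T ^^ n) (P1 + c *\<^sub>R w)) P1 = lam^n * (\<delta>/2)"
      using lam1 c0 cw by (simp add: iterT iterG dist_norm abs_mult mult.assoc)
    also have "\<dots> > 1" using n d0 by (simp add: field_simps)
    finally show False using all[of n] by simp
  qed
qed

theorem proposition1:
  fixes \<mu> \<rho> \<beta> \<Omega> wflex dyBP \<theta> \<pi> wF wC :: real
  assumes "\<mu> > 0" and "\<rho> > 0" and "0 < \<beta>" and "\<beta> < 1"
    and "0 < \<Omega>" and "\<Omega> < 1" and "0 < wflex" and "wflex < 1"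
    and "0 < \<theta>" and "\<theta> < 1" and "\<pi> > 0"
    and "(wF, wC) = (1, 0) \<or> (wF, wC) = (0, 1)"
  defines "T \<equiv> exmap \<mu> \<rho> \<beta> \<Omega> wflex dyBP \<theta> \<pi> wF wC"
    and "P1 \<equiv> (- \<Omega> * dyBP, dyBP)"
  shows "(\<forall>p. is_fixed_point T p \<longleftrightarrow> p = P1)
    \<and> ((wF, wC) = (1, 0) \<longrightarrow> locally_stable T P1)
    \<and> ((wF, wC) = (0, 1) \<longrightarrow> unstable T P1)"
  proof -
  define k where "k = \<mu> + \<rho>"
  define a where "a = wflex * \<beta>"
  define g where "g = gamma_par \<mu> \<rho> \<theta> \<pi>"
  have k0: "k > 0" using assms by (simp add: k_def)
  have a0: "a > 0" using assms by (simp add: a_def)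
  have a1: "a < 1"
  proof -
    have "wflex * \<beta> < wflex * 1" using assms by (intro mult_strict_left_mono) auto
    thus ?thesis using assms(8) unfolding a_def by linarith
  qed
  have g0: "g > 0" using assms by (simp add: g_def gamma_par_def)
  have Teq: "T (e, dy) = (e + k * spec_term wF wC \<Omega> e dy,
      dy + a * (dyBP - g * spec_term wF wC \<Omega> e dy - dy))" for e dy
    by (simp add: T_def exmap_def k_def a_def g_def)
  have S0: "spec_term wF wC \<Omega> e dy = 0 \<longleftrightarrow> e = - \<Omega> * dy" for e dy
    using assms(12) by (auto simp: spec_term_def algebra_simps)
  have fp: "\<forall>p. is_fixed_point T p \<longleftrightarrow> p = P1"
  proof
    fix p :: "real \<times> real"
    obtain e dy where p: "p = (e, dy)" by force
    have "is_fixed_point T p \<longleftrightarrow> spec_term wF wC \<Omega> e dy = 0 \<and> dy = dyBP"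
      using k0 a0 by (auto simp: is_fixed_point_def p Teq)
    also have "\<dots> \<longleftrightarrow> p = P1" using S0[of e dy] by (auto simp: p P1_def)
    finally show "is_fixed_point T p \<longleftrightarrow> p = P1" .
  qed
  have st: "(wF, wC) = (1, 0) \<longrightarrow> locally_stable T P1"
  proof
    assume w: "(wF, wC) = (1, 0)"
    show "locally_stable T P1"
    proof (rule stable_generic[OF k0 a0 a1 g0 assms(5,6)])
      fix q :: "real \<times> real"
      obtain x u where q: "q = (x, u)" by force
      have h: "- \<Omega> * (dyBP + u) - (- \<Omega> * dyBP + x) = -(x + \<Omega> * u)" by (simp add: algebra_simps)
      have "P1 + q = (- \<Omega> * dyBP + x, dyBP + u)" by (simp add: P1_def q)
      moreover have h2: "(- (\<Omega> * u) - x)^3 = - ((x + \<Omega>*u)^3)" by (simp add: power3_eq_cube algebra_simps)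
      ultimately show "T (P1 + q) = P1 + FF k a g \<Omega> q"
        using w by (simp add: Teq spec_term_def h FF_def q P1_def algebra_simps h2)
    qed
  qed
  have un: "(wF, wC) = (0, 1) \<longrightarrow> unstable T P1"
  proof
    assume w: "(wF, wC) = (0, 1)"
    show "unstable T P1"
    proof (rule unstable_generic[OF k0 a0 g0 assms(5)])
      fix q :: "real \<times> real"
      obtain x u where q: "q = (x, u)" by force
      have "P1 + q = (- \<Omega> * dyBP + x, dyBP + u)" by (simp add: P1_def q)
      thus "T (P1 + q) = P1 + GG k a g \<Omega> q"
        using w by (simp add: Teq spec_term_def GG_def q P1_def algebra_simps)
    qed
  qed
  show ?thesis using fp st un by blast
qed

end
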